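(* Let $r \in \mathbb{Q}_{>0}$ be such that $S_r$ is atomic. Then the set of elasticities $R(S_r)$ is dense in $\mathbb{R}_{\ge 1}$ if and only if $r \in \mathbb{Q}_{>1} \setminus \mathbb{N}$.
   Context: For $q \in \mathbb{Q}_{>0}$, $\mathsf{n}(q),\mathsf{d}(q)$ are the positive coprime integers with $q = \mathsf{n}(q)/\mathsf{d}(q)$. $S_r$ is the additive submonoid of $(\mathbb{Q}_{\ge 0},+)$ generated by $\{r^n : n \in \mathbb{N}_0\}$; it is atomic exactly when $r=1$ or $\mathsf{n}(r)>1$. $\mathsf{L}(x)$ denotes the set of lengths of factorizations of $x$ into atoms. The elasticity of $x \ne 0$ is $\rho(x) = \sup \mathsf{L}(x)/\inf \mathsf{L}(x) \in \mathbb{Q}_{\ge 1}\cup\{\infty\}$, $\rho(0)=1$, and $R(S_r) = \{\rho(x) : x \in S_r\}$ (density is understood for $R(S_r) \setminus \{\infty\}$ as a subset of $\mathbb{R}_{\ge 1}$). *)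

theory Defs
  imports Complex_Main "HOL-Library.Multiset" "HOL-Library.Extended_Real"
begin

inductive_set Sr :: "rat \<Rightarrow> rat set" for r :: rat where
  zero: "0 \<in> Sr r"
| add_pow: "x \<in> Sr r \<Longrightarrow> x + r ^ n \<in> Sr r"

text \<open>Atoms of a submonoid S of (Q_{\<ge>0},+): nonzero elements that are not a sum of two nonzero elements
 (the only unit is 0).\<close>
definition atoms :: "rat set \<Rightarrow> rat set" where
  "atoms S = {a \<in> S. a \<noteq> 0 \<and> \<not> (\<exists>b\<in>S. \<exists>c\<in>S. b \<noteq> 0 \<and> c \<noteq> 0 \<and> a = b + c)}"

definition factorizations :: "rat set \<Rightarrow> rat \<Rightarrow> rat multiset set" where
  "factorizations S x = {m. set_mset m \<subseteq> atoms S \<and> sum_mset m = x}"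

definition atomic_monoid :: "rat set \<Rightarrow> bool" where
  "atomic_monoid S \<longleftrightarrow> (\<forall>x\<in>S. x \<noteq> 0 \<longrightarrow> factorizations S x \<noteq> {})"

definition lengths :: "rat set \<Rightarrow> rat \<Rightarrow> nat set" where
  "lengths S x = size ` factorizations S x"

definition elasticity :: "rat set \<Rightarrow> rat \<Rightarrow> ereal" where
  "elasticity S x = (if x = 0 then 1
     else (SUP l\<in>lengths S x. ereal (real l)) / (INF l\<in>lengths S x. ereal (real l)))"

definition elasticity_set :: "rat set \<Rightarrow> ereal set" where
  "elasticity_set S = elasticity S ` S"

definition dense_in_ge1 :: "real set \<Rightarrow> bool" where
  "dense_in_ge1 A \<longleftrightarrow> (\<forall>a b. 1 \<le> a \<and> a < b \<longrightarrow> (\<exists>x\<in>A. a < x \<and> x < b))"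

end

theory Submission
  imports Defs
begin

lemma Sr_sum_mset: "set_mset M \<subseteq> range (power r) \<Longrightarrow> sum_mset M \<in> Sr r"
proof (induction M)
  case empty then show ?case by (simp add: Sr.zero)
next
  case (add y M)
  then obtain n where "y = r ^ n" by auto
  with add have "sum_mset M + r ^ n \<in> Sr r" by (intro Sr.add_pow) auto
  then show ?case using \<open>y = r ^ n\<close> by (simp add: add.commute)
qed

lemma Sr_ex_mset: "x \<in> Sr r \<Longrightarrow> \<exists>M. set_mset M \<subseteq> range (power r) \<and> sum_mset M = x"
proof (induction rule: Sr.induct)
  case zero then show ?case by (intro exI[of _ "{#}"]) auto
next
  case (add_pow x n)
  then obtain M where "set_mset M \<subseteq> range (power r)" "sum_mset M = x" by auto
  then show ?case by (intro exI[of _ "add_mset (r^n) M"]) auto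
qed

lemma sum_mset_pos: "(\<forall>y\<in>set_mset M. (0::rat) < y) \<Longrightarrow> M \<noteq> {#} \<Longrightarrow> 0 < sum_mset M"
proof (induction M)
  case empty then show ?case by simp
next
  case (add y M)
  then show ?case by (cases "M = {#}") (auto intro: add_pos_pos)
qed

lemma sum_mset_ge_size: "(\<forall>y\<in>set_mset M. (1::rat) \<le> y) \<Longrightarrow> of_nat (size M) \<le> sum_mset M"
proof (induction M)
  case empty then show ?case by simp
next
  case (add y M)
  then show ?case by auto
qed

lemma atoms_sub:
  assumes "r > 0"
  shows "atoms (Sr r) \<subseteq> range (power r)"
proof
  fix a assume a: "a \<in> atoms (Sr r)"
  then have aS: "a \<in> Sr r" and a0: "a \<noteq> 0" and na: "\<not> (\<exists>b\<in>Sr r. \<exists>c\<in>Sr r. b \<noteq> 0 \<and> c \<noteq> 0 \<and> a = b + c)"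
    by (auto simp: atoms_def)
  obtain M where M: "set_mset M \<subseteq> range (power r)" "sum_mset M = a" using Sr_ex_mset[OF aS] by blast
  have "M \<noteq> {#}" using M a0 by auto
  then obtain y M' where yM: "M = add_mset y M'" by (metis multiset_cases)
  show "a \<in> range (power r)"
  proof (cases "M' = {#}")
    case True then show ?thesis using M yM by auto
  next
    case False
    have pos: "\<forall>z\<in>set_mset M. 0 < z" using M assms by auto
    have "0 < sum_mset M'" using pos yM False by (intro sum_mset_pos) auto
    moreover have "0 < y" using pos yM by auto
    moreover have "y \<in> Sr r" using Sr_sum_mset[of "{#y#}" r] M yM by auto
    moreover have "sum_mset M' \<in> Sr r" using Sr_sum_mset[of M' r] M yM by auto
    moreover have "a = y + sum_mset M'" using M yM by auto
    ultimately show ?thesis using na by force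
  qed
qed

lemma pow_in_Sr: "r ^ n \<in> Sr r"
  using Sr.add_pow[OF Sr.zero, of r n] by simp

lemma mult_pow_in_Sr: "of_nat k * r ^ n \<in> Sr r"
proof (induction k)
  case 0 then show ?case by (simp add: Sr.zero)
next
  case (Suc k) then show ?case using Sr.add_pow[OF Suc, of n] by (simp add: algebra_simps)
qed

lemma sum_rep:
  assumes inj: "inj (power r)" and "set_mset M \<subseteq> power r ` {..<K}"
  shows "sum_mset M = (\<Sum>n<K. of_nat (count M (r ^ n)) * r ^ n)"
    and "size M = (\<Sum>n<K. count M (r ^ n))"
  using assms(2)
proof (induction M)
  case empty
  { case 1 show ?case by simp }
  { case 2 show ?case by simp }
next
  case (add y M)
  { case 1
    then obtain e where e: "e < K" "y = r ^ e" by auto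
    have ceq: "\<And>n. count (add_mset y M) (r ^ n) = count M (r ^ n) + (if n = e then 1 else 0)"
      using inj e by (auto simp: inj_eq)
    have "(\<Sum>n<K. of_nat (count (add_mset y M) (r ^ n)) * r ^ n)
       = (\<Sum>n<K. of_nat (count M (r ^ n)) * r ^ n + (if n = e then r ^ n else 0))"
      by (rule sum.cong[OF refl], subst ceq) (simp add: algebra_simps)
    also have "\<dots> = (\<Sum>n<K. of_nat (count M (r ^ n)) * r ^ n) + (\<Sum>n<K. (if n = e then r ^ n else 0))"
      by (rule sum.distrib)
    also have "(\<Sum>n<K. (if n = e then r ^ n else 0)) = r ^ e" using e by simp
    finally show ?case using add 1 e by (simp add: add.commute)
  }
  { case 2
    then obtain e where e: "e < K" "y = r ^ e" by auto
    have ceq: "\<And>n. count (add_mset y M) (r ^ n) = count M (r ^ n) + (if n = e then 1 else 0)"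
      using inj e by (auto simp: inj_eq)
    have "(\<Sum>n<K. count (add_mset y M) (r ^ n)) = (\<Sum>n<K. count M (r ^ n) + (if n = e then 1 else 0))"
      by (rule sum.cong[OF refl], subst ceq) simp
    also have "\<dots> = (\<Sum>n<K. count M (r ^ n)) + (\<Sum>n<K. (if n = e then 1 else 0))"
      by (rule sum.distrib)
    also have "(\<Sum>n<K. (if n = e then 1::nat else 0)) = 1" using e by simp
    finally show ?case using add 2 e by simp
  }
qed

fun V :: "int \<Rightarrow> int \<Rightarrow> (nat \<Rightarrow> int) \<Rightarrow> nat \<Rightarrow> int" where
  "V p q a 0 = 0"
| "V p q a (Suc K) = q * V p q a K + a K * p ^ K"

lemma V_rat:
  assumes "q \<noteq> 0" "r = of_int p / of_int q"
  shows "(of_int q :: rat) ^ K * (\<Sum>n<K. of_int (a n) * r ^ n) = of_int (q * V p q a K)"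
proof (induction K)
  case 0 then show ?case by simp
next
  case (Suc K)
  have qr: "(of_int q :: rat) * r = of_int p" using assms by simp
  have "(of_int q :: rat) ^ Suc K * (\<Sum>n<Suc K. of_int (a n) * r ^ n)
      = of_int q * ((of_int q) ^ K * (\<Sum>n<K. of_int (a n) * r ^ n)) + of_int q * of_int (a K) * (of_int q * r) ^ K"
    by (simp add: algebra_simps power_mult_distrib)
  also have "\<dots> = of_int (q * V p q (a) (Suc K))" using Suc qr by (simp add: algebra_simps)
  finally show ?case .
qed

lemma V_split: "V p q a (Suc K) = a 0 * q ^ K + p * V p q (\<lambda>n. a (Suc n)) K"
  by (induction K) (simp_all add: algebra_simps)

lemma small_dvd_zero: "(p::int) dvd d \<Longrightarrow> \<bar>d\<bar> < p \<Longrightarrow> d = 0"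
proof (rule ccontr)
  assume "(p::int) dvd d" "\<bar>d\<bar> < p" "d \<noteq> 0"
  then have "\<bar>p\<bar> \<le> \<bar>d\<bar>" using dvd_imp_le_int by blast
  then show False using \<open>\<bar>d\<bar> < p\<close> by linarith
qed

lemma minU:
  assumes "coprime p q" "p > 0"
  shows "\<lbrakk>\<forall>n<K. 0 \<le> a n \<and> a n < p; \<forall>n<K. 0 \<le> b n \<and> b n < p; V p q a K = V p q b K\<rbrakk>
         \<Longrightarrow> \<forall>n<K. a n = b n"
proof (induction K arbitrary: a b)
  case 0 then show ?case by simp
next
  case (Suc K)
  have e: "a 0 * q ^ K + p * V p q (\<lambda>n. a (Suc n)) K = b 0 * q ^ K + p * V p q (\<lambda>n. b (Suc n)) K"
    using Suc.prems(3) by (simp only: V_split)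
  have "p dvd (a 0 - b 0) * q ^ K"
  proof -
    have "(a 0 - b 0) * q ^ K = p * (V p q (\<lambda>n. b (Suc n)) K - V p q (\<lambda>n. a (Suc n)) K)"
      using e by (simp add: algebra_simps)
    then show ?thesis by simp
  qed
  then have "p dvd a 0 - b 0" using assms by (simp add: coprime_dvd_mult_left_iff)
  moreover have "\<bar>a 0 - b 0\<bar> < p"
  proof -
    have "0 \<le> a 0" "a 0 < p" "0 \<le> b 0" "b 0 < p" using Suc.prems(1,2) by auto
    then show ?thesis by (simp add: abs_less_iff)
  qed
  ultimately have a0: "a 0 = b 0" using small_dvd_zero by fastforce
  with e have "V p q (\<lambda>n. a (Suc n)) K = V p q (\<lambda>n. b (Suc n)) K" using assms by simp
  moreover have "\<forall>n<K. 0 \<le> a (Suc n) \<and> a (Suc n) < p" using Suc.prems(1) by auto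
  moreover have "\<forall>n<K. 0 \<le> b (Suc n) \<and> b (Suc n) < p" using Suc.prems(2) by auto
  ultimately have IH: "\<forall>n<K. a (Suc n) = b (Suc n)" using Suc.IH[of "\<lambda>n. a (Suc n)" "\<lambda>n. b (Suc n)"] by blast
  show ?case
  proof (intro allI impI)
    fix n assume "n < Suc K"
    then show "a n = b n" using a0 IH by (cases n) auto
  qed
qed

lemma maxU:
  assumes "coprime p q" "q > 0"
  shows "\<lbrakk>\<forall>n<K. 1 \<le> n \<longrightarrow> 0 \<le> a n \<and> a n < q; \<forall>n<K. 1 \<le> n \<longrightarrow> 0 \<le> b n \<and> b n < q; V p q a K = V p q b K\<rbrakk>
         \<Longrightarrow> \<forall>n<K. a n = b n"
proof (induction K arbitrary: a b)
  case 0 then show ?case by simp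
next
  case (Suc K)
  show ?case
  proof (cases "K = 0")
    case True then show ?thesis using Suc.prems(3) by simp
  next
    case False
    have e: "q * V p q a K + a K * p ^ K = q * V p q b K + b K * p ^ K" using Suc.prems(3) by simp
    have "q dvd (a K - b K) * p ^ K"
    proof -
      have "(a K - b K) * p ^ K = q * (V p q b K - V p q a K)"
        using e by (simp add: algebra_simps)
      then show ?thesis by simp
    qed
    then have "q dvd a K - b K" using assms by (simp add: coprime_dvd_mult_left_iff coprime_commute)
    moreover have "\<bar>a K - b K\<bar> < q"
    proof -
      have "0 \<le> a K" "a K < q" "0 \<le> b K" "b K < q" using Suc.prems(1,2) False by auto
      then show ?thesis by (simp add: abs_less_iff)
    qed
    ultimately have aK: "a K = b K" using small_dvd_zero by fastforce
    with e have "V p q a K = V p q b K" using assms by simp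
    moreover have "\<forall>n<K. 1 \<le> n \<longrightarrow> 0 \<le> a n \<and> a n < q" using Suc.prems(1) by auto
    moreover have "\<forall>n<K. 1 \<le> n \<longrightarrow> 0 \<le> b n \<and> b n < q" using Suc.prems(2) by auto
    ultimately have IH: "\<forall>n<K. a n = b n" using Suc.IH[of a b] by blast
    show ?thesis
    proof (intro allI impI)
      fix n assume "n < Suc K"
      then show "a n = b n" using aK IH by (cases "n = K") auto
    qed
  qed
qed


lemma V_dvd: "(\<forall>j\<le>n. a j = 0) \<Longrightarrow> p ^ Suc n dvd V p q a K"
proof (induction K)
  case 0 then show ?case by simp
next
  case (Suc K)
  show ?case
  proof (cases "K \<le> n")
    case True then show ?thesis using Suc by simp
  next
    case False
    then have "p ^ Suc n dvd p ^ K" by (intro le_imp_power_dvd) simp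
    then show ?thesis using Suc by simp
  qed
qed

lemma finite_pow_bound:
  assumes "finite X" "X \<subseteq> range (power (r::rat))"
  shows "\<exists>K. X \<subseteq> power r ` {..<K}"
proof -
  obtain C where C: "finite C" "X = power r ` C" using finite_subset_image[OF assms(1) assms(2)] by auto
  then obtain K where "C \<subseteq> {..<K}" by (auto simp: finite_nat_set_iff_bounded)
  then show ?thesis using C by blast
qed

lemma inj_pow: assumes "(r::rat) > 0" "r \<noteq> 1" shows "inj (power r)"
proof (rule injI)
  fix m n assume e: "r ^ m = r ^ n"
  show "m = n"
  proof (cases "r > 1")
    case True then show ?thesis using e by simp
  next
    case False
    then have "1 < 1 / r" using assms by (simp add: field_simps)
    moreover have "(1/r) ^ m = (1/r) ^ n" using e by (simp add: power_one_over)
    ultimately show ?thesis by simp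
  qed
qed

lemma count_int_sum:
  fixes r :: rat
  assumes "inj (power r)" "set_mset M \<subseteq> power r ` {..<K}"
  shows "sum_mset M = (\<Sum>n<K. of_int (int (count M (r ^ n))) * r ^ n)"
  using sum_rep(1)[OF assms] by simp

lemma mset_eq_from_counts:
  assumes "set_mset A \<subseteq> range (power r)" "set_mset B \<subseteq> range (power r)"
    "\<And>n. count A (r ^ n) = count B (r ^ n)"
  shows "A = B"
proof (rule multiset_eqI)
  fix x show "count A x = count B x"
  proof (cases "x \<in> range (power r)")
    case True then show ?thesis using assms(3) by auto
  next
    case False
    then have "x \<notin># A" "x \<notin># B" using assms by auto
    then show ?thesis by (simp add: not_in_iff)
  qed
qed

lemma common_bound:
  assumes "set_mset A \<subseteq> range (power (r::rat))" "set_mset B \<subseteq> range (power r)"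
  obtains K where "set_mset A \<subseteq> power r ` {..<K}" "set_mset B \<subseteq> power r ` {..<K}"
proof -
  obtain K where "set_mset A \<union> set_mset B \<subseteq> power r ` {..<K}"
    using finite_pow_bound[of "set_mset A \<union> set_mset B" r] assms by auto
  then show ?thesis using that by auto
qed

lemma beyond_zero:
  assumes "inj (power r)" "set_mset A \<subseteq> power r ` {..<K}" "n \<ge> K"
  shows "count A (r ^ n) = 0"
proof -
  have "r ^ n \<notin> power r ` {..<K}" using assms(1,3) by (auto simp: inj_eq)
  then show ?thesis using assms(2) by (auto simp: not_in_iff[symmetric])
qed

lemma V_eq_from_sum:
  fixes r :: rat
  assumes "q \<noteq> 0" "r = of_int p / of_int q" "inj (power r)"
    "set_mset A \<subseteq> power r ` {..<K}" "set_mset B \<subseteq> power r ` {..<K}" "sum_mset A = sum_mset B"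
  shows "V p q (\<lambda>n. int (count A (r ^ n))) K = V p q (\<lambda>n. int (count B (r ^ n))) K"
proof -
  have eA: "(of_int q :: rat) ^ K * sum_mset A = of_int (q * V p q (\<lambda>n. int (count A (r ^ n))) K)"
    unfolding count_int_sum[OF assms(3,4)] by (rule V_rat[OF assms(1,2)])
  have eB: "(of_int q :: rat) ^ K * sum_mset B = of_int (q * V p q (\<lambda>n. int (count B (r ^ n))) K)"
    unfolding count_int_sum[OF assms(3,5)] by (rule V_rat[OF assms(1,2)])
  have "of_int (q * V p q (\<lambda>n. int (count A (r ^ n))) K) = (of_int (q * V p q (\<lambda>n. int (count B (r ^ n))) K) :: rat)"
    using eA eB assms(6) by (metis (no_types))
  then show ?thesis using assms(1) by simp
qed



lemma uniq_min:
  fixes r :: rat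
  assumes "q > 0" "p > 0" "coprime p q" "r = of_int p / of_int q" "r \<noteq> 1"
    "set_mset A \<subseteq> range (power r)" "set_mset B \<subseteq> range (power r)" "sum_mset A = sum_mset B"
    "\<And>n. int (count A (r ^ n)) < p" "\<And>n. int (count B (r ^ n)) < p"
  shows "A = B"
proof -
  have r0: "r > 0" unfolding assms(4) using assms(1,2) by simp
  have inj: "inj (power r)" using inj_pow[OF r0 assms(5)] .
  obtain K where K: "set_mset A \<subseteq> power r ` {..<K}" "set_mset B \<subseteq> power r ` {..<K}"
    using common_bound[OF assms(6,7)] by blast
  have q0: "q \<noteq> 0" using assms(1) by simp
  have VV: "V p q (\<lambda>n. int (count A (r ^ n))) K = V p q (\<lambda>n. int (count B (r ^ n))) K"
    by (rule V_eq_from_sum[OF q0 assms(4) inj K assms(8)])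
  have pa: "\<forall>n<K. 0 \<le> int (count A (r ^ n)) \<and> int (count A (r ^ n)) < p" using assms(9) by simp
  have pb: "\<forall>n<K. 0 \<le> int (count B (r ^ n)) \<and> int (count B (r ^ n)) < p" using assms(10) by simp
  have H: "\<forall>n<K. int (count A (r ^ n)) = int (count B (r ^ n))"
    by (rule minU[OF assms(3,2) pa pb VV])
  have H2: "\<And>n. count A (r ^ n) = count B (r ^ n)"
  proof -
    fix n
    show "count A (r ^ n) = count B (r ^ n)"
    proof (cases "n < K")
      case True then show ?thesis using H by simp
    next
      case False then show ?thesis using beyond_zero[OF inj K(1)] beyond_zero[OF inj K(2)] by simp
    qed
  qed
  show ?thesis by (rule mset_eq_from_counts[OF assms(6,7) H2])
qed

lemma uniq_max:
  fixes r :: rat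
  assumes "q > 0" "p > 0" "coprime p q" "r = of_int p / of_int q" "r \<noteq> 1"
    "set_mset A \<subseteq> range (power r)" "set_mset B \<subseteq> range (power r)" "sum_mset A = sum_mset B"
    "\<And>n. n \<ge> 1 \<Longrightarrow> int (count A (r ^ n)) < q" "\<And>n. n \<ge> 1 \<Longrightarrow> int (count B (r ^ n)) < q"
  shows "A = B"
proof -
  have r0: "r > 0" unfolding assms(4) using assms(1,2) by simp
  have inj: "inj (power r)" using inj_pow[OF r0 assms(5)] .
  obtain K where K: "set_mset A \<subseteq> power r ` {..<K}" "set_mset B \<subseteq> power r ` {..<K}"
    using common_bound[OF assms(6,7)] by blast
  have q0: "q \<noteq> 0" using assms(1) by simp
  have VV: "V p q (\<lambda>n. int (count A (r ^ n))) K = V p q (\<lambda>n. int (count B (r ^ n))) K"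
    by (rule V_eq_from_sum[OF q0 assms(4) inj K assms(8)])
  have pa: "\<forall>n<K. 1 \<le> n \<longrightarrow> 0 \<le> int (count A (r ^ n)) \<and> int (count A (r ^ n)) < q" using assms(9) by simp
  have pb: "\<forall>n<K. 1 \<le> n \<longrightarrow> 0 \<le> int (count B (r ^ n)) \<and> int (count B (r ^ n)) < q" using assms(10) by simp
  have H: "\<forall>n<K. int (count A (r ^ n)) = int (count B (r ^ n))"
    by (rule maxU[OF assms(3,1) pa pb VV])
  have H2: "\<And>n. count A (r ^ n) = count B (r ^ n)"
  proof -
    fix n
    show "count A (r ^ n) = count B (r ^ n)"
    proof (cases "n < K")
      case True then show ?thesis using H by simp
    next
      case False then show ?thesis using beyond_zero[OF inj K(1)] beyond_zero[OF inj K(2)] by simp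
    qed
  qed
  show ?thesis by (rule mset_eq_from_counts[OF assms(6,7) H2])
qed

lemma sum_mset_nonneg': "(\<forall>y\<in>set_mset M. (0::rat) \<le> y) \<Longrightarrow> 0 \<le> sum_mset M"
  by (induction M) auto

lemma elem_le_sum: "y \<in># M \<Longrightarrow> (\<forall>z\<in>set_mset M. (0::rat) \<le> z) \<Longrightarrow> y \<le> sum_mset M"
proof -
  assume y: "y \<in># M" and nn: "\<forall>z\<in>set_mset M. (0::rat) \<le> z"
  obtain A where A: "M = add_mset y A" using multi_member_split[OF y] by blast
  have "0 \<le> sum_mset A" using nn A by (intro sum_mset_nonneg') auto
  then show ?thesis using A by simp
qed

lemma split_lt:
  fixes b c :: rat
  assumes "b \<in> Sr r" "c \<in> Sr r" "b \<noteq> 0" "c \<noteq> 0" "r > 0"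
  obtains M where "set_mset M \<subseteq> range (power r)" "sum_mset M = b + c" "M \<noteq> {#}"
     "\<And>y. y \<in># M \<Longrightarrow> y < b + c"
proof -
  obtain Mb where Mb: "set_mset Mb \<subseteq> range (power r)" "sum_mset Mb = b" using Sr_ex_mset[OF assms(1)] by blast
  obtain Mc where Mc: "set_mset Mc \<subseteq> range (power r)" "sum_mset Mc = c" using Sr_ex_mset[OF assms(2)] by blast
  have pb: "\<forall>z\<in>set_mset Mb. 0 < z" using Mb assms(5) by auto
  have pc: "\<forall>z\<in>set_mset Mc. 0 < z" using Mc assms(5) by auto
  have b0: "0 < b" using sum_mset_pos[OF pb] Mb assms(3) by (cases "Mb = {#}") auto
  have c0: "0 < c" using sum_mset_pos[OF pc] Mc assms(4) by (cases "Mc = {#}") auto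
  have "Mb \<noteq> {#}" using Mb assms(3) by auto
  moreover have "\<And>y. y \<in># Mb + Mc \<Longrightarrow> y < b + c"
  proof -
    fix y assume "y \<in># Mb + Mc"
    then consider "y \<in># Mb" | "y \<in># Mc" by auto
    then show "y < b + c"
    proof cases
      case 1 then have "y \<le> b" using elem_le_sum[of y Mb] pb Mb by fastforce
      then show ?thesis using c0 by linarith
    next
      case 2 then have "y \<le> c" using elem_le_sum[of y Mc] pc Mc by fastforce
      then show ?thesis using b0 by linarith
    qed
  qed
  ultimately show ?thesis using that[of "Mb + Mc"] Mb Mc by auto
qed

lemma pow_atom_gt1:
  fixes r :: rat and P Q :: nat
  assumes "Q \<ge> 2" "P > 0" "coprime P Q" "r = of_nat P / of_nat Q" "r > 1"
  shows "r ^ n \<in> atoms (Sr r)"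
proof -
  have r0: "r > 0" using assms by linarith
  have inj: "inj (power r)" using inj_pow[OF r0] assms(5) by simp
  have "\<not> (\<exists>b\<in>Sr r. \<exists>c\<in>Sr r. b \<noteq> 0 \<and> c \<noteq> 0 \<and> r ^ n = b + c)"
  proof
    assume "\<exists>b\<in>Sr r. \<exists>c\<in>Sr r. b \<noteq> 0 \<and> c \<noteq> 0 \<and> r ^ n = b + c"
    then obtain b c where bc: "b \<in> Sr r" "c \<in> Sr r" "b \<noteq> 0" "c \<noteq> 0" "r ^ n = b + c" by blast
    obtain M where M: "set_mset M \<subseteq> range (power r)" "sum_mset M = b + c" "M \<noteq> {#}"
      "\<And>y. y \<in># M \<Longrightarrow> y < b + c" using split_lt[OF bc(1-4) r0] by blast
    have sub: "set_mset M \<subseteq> power r ` {..<n}"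
    proof
      fix y assume y: "y \<in> set_mset M"
      then obtain e where e: "y = r ^ e" using M(1) by auto
      have "r ^ e < r ^ n" using M(4) y e bc(5) by auto
      then have "e < n" using power_less_imp_less_exp[OF assms(5)] by blast
      then show "y \<in> power r ` {..<n}" using e by auto
    qed
    have qn: "int Q \<noteq> 0" using assms(1) by simp
    have rr: "r = of_int (int P) / of_int (int Q)" using assms(4) by simp
    have "(of_int (int Q) :: rat) ^ n * sum_mset M = of_int (int Q * V (int P) (int Q) (\<lambda>j. int (count M (r ^ j))) n)"
      unfolding count_int_sum[OF inj sub] by (rule V_rat[OF qn rr])
    moreover have "(of_int (int Q) :: rat) ^ n * sum_mset M = of_int (int P ^ n)"
    proof -
      have "(of_int (int Q) :: rat) ^ n * sum_mset M = (of_int (int Q) * r) ^ n" using M(2) bc(5) by (simp add: power_mult_distrib)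
      also have "of_int (int Q) * r = of_int (int P)" using rr qn by simp
      finally show ?thesis by simp
    qed
    ultimately have "int P ^ n = int Q * V (int P) (int Q) (\<lambda>j. int (count M (r ^ j))) n"
      by (metis of_int_eq_iff)
    then have "int Q dvd int P ^ n" by simp
    moreover have "coprime (int Q) (int P ^ n)" using assms(3) by (simp add: coprime_commute)
    ultimately have "is_unit (int Q)" using coprime_common_divisor[of "int Q" "int P ^ n" "int Q"] by auto
    then show False using assms(1) by simp
  qed
  then show ?thesis unfolding atoms_def using pow_in_Sr[of r n] r0 by auto
qed

lemma pow_atom_lt1:
  fixes r :: rat and P Q :: nat
  assumes "P \<ge> 2" "Q > 0" "coprime P Q" "r = of_nat P / of_nat Q" "r < 1"
  shows "r ^ n \<in> atoms (Sr r)"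
proof -
  have r0: "r > 0" using assms by simp
  have inj: "inj (power r)" using inj_pow[OF r0] assms(5) by simp
  have "\<not> (\<exists>b\<in>Sr r. \<exists>c\<in>Sr r. b \<noteq> 0 \<and> c \<noteq> 0 \<and> r ^ n = b + c)"
  proof
    assume "\<exists>b\<in>Sr r. \<exists>c\<in>Sr r. b \<noteq> 0 \<and> c \<noteq> 0 \<and> r ^ n = b + c"
    then obtain b c where bc: "b \<in> Sr r" "c \<in> Sr r" "b \<noteq> 0" "c \<noteq> 0" "r ^ n = b + c" by blast
    obtain M where M: "set_mset M \<subseteq> range (power r)" "sum_mset M = b + c" "M \<noteq> {#}"
      "\<And>y. y \<in># M \<Longrightarrow> y < b + c" using split_lt[OF bc(1-4) r0] by blast
    obtain K where K: "set_mset M \<subseteq> power r ` {..<K}" using finite_pow_bound[of "set_mset M" r] M(1) by auto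
    have big: "\<And>e. r ^ e \<in># M \<Longrightarrow> n < e"
    proof -
      fix e assume "r ^ e \<in># M"
      then have "r ^ e < r ^ n" using M(4) bc(5) by auto
      then show "n < e" using r0 assms(5) by simp
    qed
    obtain y where y: "y \<in># M" using M(3) by blast
    then obtain e where e: "y = r ^ e" "e < K" using K by auto
    have nK: "n < K" using big[of e] y e by auto
    have z: "\<forall>j\<le>n. int (count M (r ^ j)) = 0"
    proof (intro allI impI)
      fix j assume "j \<le> n"
      then have "\<not> r ^ j \<in># M" using big leD by blast
      then show "int (count M (r ^ j)) = 0" by (simp add: not_in_iff)
    qed
    have dv: "int P ^ Suc n dvd V (int P) (int Q) (\<lambda>j. int (count M (r ^ j))) K"
      by (rule V_dvd[OF z])
    have qn: "int Q \<noteq> 0" using assms(2) by simp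
    have rr: "r = of_int (int P) / of_int (int Q)" using assms(4) by simp
    have "(of_int (int Q) :: rat) ^ K * sum_mset M = of_int (int Q * V (int P) (int Q) (\<lambda>j. int (count M (r ^ j))) K)"
      unfolding count_int_sum[OF inj K] by (rule V_rat[OF qn rr])
    moreover have "(of_int (int Q) :: rat) ^ K * sum_mset M = of_int (int Q ^ (K - n) * int P ^ n)"
    proof -
      have "(of_int (int Q) :: rat) ^ K = of_int (int Q) ^ (K - n) * of_int (int Q) ^ n"
        using nK by (simp add: power_add[symmetric])
      then have "(of_int (int Q) :: rat) ^ K * sum_mset M = of_int (int Q) ^ (K - n) * (of_int (int Q) * r) ^ n"
        using M(2) bc(5) by (simp add: power_mult_distrib)
      also have "of_int (int Q) * r = of_int (int P)" using rr qn by simp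
      finally show ?thesis by simp
    qed
    ultimately have eq: "int Q ^ (K - n) * int P ^ n = int Q * V (int P) (int Q) (\<lambda>j. int (count M (r ^ j))) K"
      by (metis of_int_eq_iff)
    have "int P ^ Suc n dvd int Q ^ (K - n) * int P ^ n" unfolding eq using dv by simp
    then have "int P ^ n * int P dvd int P ^ n * int Q ^ (K - n)" by (simp add: mult.commute)
    then have "int P dvd int Q ^ (K - n)" using assms(1) by simp
    moreover have "coprime (int P) (int Q ^ (K - n))" using assms(3) by simp
    ultimately have "is_unit (int P)" using coprime_common_divisor[of "int P" "int Q ^ (K - n)" "int P"] by auto
    then show False using assms(1) by simp
  qed
  then show ?thesis unfolding atoms_def using pow_in_Sr[of r n] r0 by auto
qed

lemma move:
  assumes "f \<in> factorizations S x" "k \<le> count f y" "of_nat k * y = of_nat l * z" "z \<in> atoms S"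
  shows "f - replicate_mset k y + replicate_mset l z \<in> factorizations S x"
    and "size (f - replicate_mset k y + replicate_mset l z) = size f - k + l"
    and "size f \<ge> k"
proof -
  have sub: "replicate_mset k y \<subseteq># f" using assms(2) by (simp add: count_le_replicate_mset_subset_eq)
  have s1: "sum_mset f = sum_mset (f - replicate_mset k y) + of_nat k * y"
    using subset_mset.diff_add[OF sub] by (metis sum_mset.union sum_mset_replicate_mset)
  have "set_mset (f - replicate_mset k y) \<subseteq> set_mset f" by (auto dest: in_diffD)
  then show "f - replicate_mset k y + replicate_mset l z \<in> factorizations S x"
    using assms s1 unfolding factorizations_def by (auto simp: algebra_simps)
  show "size f \<ge> k" using size_mset_mono[OF sub] by simp
  show "size (f - replicate_mset k y + replicate_mset l z) = size f - k + l"
    using size_Diff_submset[OF sub] by simp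
qed

lemma fact_pows:
  assumes "r > 0" "f \<in> factorizations (Sr r) x"
  shows "set_mset f \<subseteq> range (power r)" "sum_mset f = x"
  using assms atoms_sub[OF assms(1)] unfolding factorizations_def by auto

lemma step_eq:
  fixes r :: rat
  assumes "r = of_nat P / of_nat Q" "Q > 0"
  shows "of_nat P * r ^ n = of_nat Q * r ^ Suc n"
proof -
  have "of_nat Q * r = of_nat P" using assms by simp
  then show ?thesis by (metis mult.assoc power_Suc)
qed

lemma minThm:
  fixes r :: rat and P Q :: nat
  assumes A: "Q \<ge> 2" "P > Q" "coprime P Q" "r = of_nat P / of_nat Q"
    and g: "g \<in> factorizations (Sr r) x" "\<forall>n. count g (r ^ n) < P"
  shows "f \<in> factorizations (Sr r) x \<Longrightarrow> size g \<le> size f"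
proof (induction "size f" arbitrary: f rule: less_induct)
  case less
  have r1: "r > 1" using A by simp
  have r0: "r > 0" using r1 by simp
  show ?case
  proof (cases "\<forall>n. count f (r ^ n) < P")
    case True
    have "f = g"
    proof (rule uniq_min[of "int Q" "int P" r])
      show "int Q > 0" "int P > 0" using A by auto
      show "coprime (int P) (int Q)" using A by simp
      show "r = of_int (int P) / of_int (int Q)" using A by simp
      show "r \<noteq> 1" using r1 by simp
      show "set_mset f \<subseteq> range (power r)" "set_mset g \<subseteq> range (power r)"
        using fact_pows[OF r0] less.prems g(1) by auto
      show "sum_mset f = sum_mset g" using fact_pows[OF r0] less.prems g(1) by auto
      show "\<And>n. int (count f (r ^ n)) < int P" "\<And>n. int (count g (r ^ n)) < int P" using True g(2) by auto
    qed
    then show ?thesis by simp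
  next
    case False
    then obtain n where n: "P \<le> count f (r ^ n)" by (auto simp: not_less)
    have at: "r ^ Suc n \<in> atoms (Sr r)" using pow_atom_gt1[of Q P r "Suc n"] A r1 by linarith
    have se: "of_nat P * r ^ n = of_nat Q * r ^ Suc n" using step_eq A by simp
    note mv = move[OF less.prems n se at]
    have "size (f - replicate_mset P (r ^ n) + replicate_mset Q (r ^ Suc n)) < size f"
      using mv(2,3) A by simp
    then have "size g \<le> size (f - replicate_mset P (r ^ n) + replicate_mset Q (r ^ Suc n))"
      using less.hyps mv(1) by blast
    then show ?thesis using mv(2,3) A by simp
  qed
qed

lemma exist_min:
  fixes r :: rat and P Q :: nat
  assumes A: "Q \<ge> 2" "P > Q" "coprime P Q" "r = of_nat P / of_nat Q"
  shows "f \<in> factorizations (Sr r) x \<Longrightarrow> \<exists>g\<in>factorizations (Sr r) x. (\<forall>n. count g (r ^ n) < P) \<and> size g \<le> size f"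
proof (induction "size f" arbitrary: f rule: less_induct)
  case less
  have r1: "r > 1" using A by simp
  show ?case
  proof (cases "\<forall>n. count f (r ^ n) < P")
    case True then show ?thesis using less.prems by blast
  next
    case False
    then obtain n where n: "P \<le> count f (r ^ n)" by (auto simp: not_less)
    have at: "r ^ Suc n \<in> atoms (Sr r)" using pow_atom_gt1[of Q P r "Suc n"] A r1 by linarith
    have se: "of_nat P * r ^ n = of_nat Q * r ^ Suc n" using step_eq A by simp
    note mv = move[OF less.prems n se at]
    have "size (f - replicate_mset P (r ^ n) + replicate_mset Q (r ^ Suc n)) < size f"
      using mv(2,3) A by simp
    then obtain g where "g\<in>factorizations (Sr r) x" "(\<forall>n. count g (r ^ n) < P)"
      "size g \<le> size (f - replicate_mset P (r ^ n) + replicate_mset Q (r ^ Suc n))"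
      using less.hyps mv(1) by blast
    then show ?thesis using mv(2,3) A by (intro bexI[of _ g]) auto
  qed
qed

lemma size_le_x:
  fixes r :: rat
  assumes "r > 1" "f \<in> factorizations (Sr r) x"
  shows "size f \<le> nat \<lceil>x\<rceil>"
proof -
  have r0: "r > 0" using assms by simp
  have "\<forall>y\<in>set_mset f. 1 \<le> y" using fact_pows[OF r0 assms(2)] assms(1) by (auto intro: one_le_power)
  then have "of_nat (size f) \<le> x" using sum_mset_ge_size fact_pows[OF r0 assms(2)] by metis
  then have "\<lceil>(of_nat (size f) :: rat)\<rceil> \<le> \<lceil>x\<rceil>" by (rule ceiling_mono)
  then have "int (size f) \<le> \<lceil>x\<rceil>" by simp
  then show ?thesis by linarith
qed

lemma maxThm:
  fixes r :: rat and P Q :: nat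
  assumes A: "Q \<ge> 2" "P > Q" "coprime P Q" "r = of_nat P / of_nat Q"
    and g: "g \<in> factorizations (Sr r) x" "\<forall>n\<ge>1. count g (r ^ n) < Q"
  shows "f \<in> factorizations (Sr r) x \<Longrightarrow> size f \<le> size g"
proof (induction "nat \<lceil>x\<rceil> - size f" arbitrary: f rule: less_induct)
  case less
  have r1: "r > 1" using A by simp
  have r0: "r > 0" using r1 by simp
  show ?case
  proof (cases "\<forall>n\<ge>1. count f (r ^ n) < Q")
    case True
    have "f = g"
    proof (rule uniq_max[of "int Q" "int P" r])
      show "int Q > 0" "int P > 0" using A by auto
      show "coprime (int P) (int Q)" using A by simp
      show "r = of_int (int P) / of_int (int Q)" using A by simp
      show "r \<noteq> 1" using r1 by simp
      show "set_mset f \<subseteq> range (power r)" "set_mset g \<subseteq> range (power r)"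
        using fact_pows[OF r0] less.prems g(1) by auto
      show "sum_mset f = sum_mset g" using fact_pows[OF r0] less.prems g(1) by auto
      show "\<And>n. n \<ge> 1 \<Longrightarrow> int (count f (r ^ n)) < int Q" "\<And>n. n \<ge> 1 \<Longrightarrow> int (count g (r ^ n)) < int Q"
        using True g(2) by auto
    qed
    then show ?thesis by simp
  next
    case False
    then obtain n where n1: "n \<ge> 1" and n: "Q \<le> count f (r ^ n)" by (auto simp: not_less)
    obtain m where m: "n = Suc m" using n1 by (cases n) auto
    have at: "r ^ m \<in> atoms (Sr r)" using pow_atom_gt1[of Q P r m] A r1 by linarith
    have se: "of_nat Q * r ^ n = of_nat P * r ^ m" using step_eq[OF A(4), of m] A m by simp
    note mv = move[OF less.prems n se at]
    let ?f = "f - replicate_mset Q (r ^ n) + replicate_mset P (r ^ m)"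
    have sz: "size ?f = size f - Q + P" "size f \<ge> Q" using mv(2,3) .
    have "size ?f \<le> nat \<lceil>x\<rceil>" using size_le_x[OF r1 mv(1)] .
    then have "nat \<lceil>x\<rceil> - size ?f < nat \<lceil>x\<rceil> - size f" using sz A by simp
    then have "size ?f \<le> size g" using less.hyps mv(1) by blast
    then show ?thesis using sz A by simp
  qed
qed

lemma elast_eq:
  assumes "x \<noteq> 0" "f \<in> factorizations S x" "g \<in> factorizations S x"
    "\<And>h. h \<in> factorizations S x \<Longrightarrow> size f \<le> size h \<and> size h \<le> size g"
  shows "elasticity S x = ereal (real (size g) / real (size f))"
proof -
  have f0: "size f \<noteq> 0" using assms(1,2) unfolding factorizations_def by auto
  have sup: "(SUP l\<in>lengths S x. ereal (real l)) = ereal (real (size g))"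
  proof (rule antisym)
    show "(SUP l\<in>lengths S x. ereal (real l)) \<le> ereal (real (size g))"
      using assms(4) unfolding lengths_def by (auto intro!: SUP_least)
    show "ereal (real (size g)) \<le> (SUP l\<in>lengths S x. ereal (real l))"
      using assms(3) unfolding lengths_def by (auto intro!: SUP_upper)
  qed
  have inf: "(INF l\<in>lengths S x. ereal (real l)) = ereal (real (size f))"
  proof (rule antisym)
    show "ereal (real (size f)) \<le> (INF l\<in>lengths S x. ereal (real l))"
      using assms(4) unfolding lengths_def by (auto intro!: INF_greatest)
    show "(INF l\<in>lengths S x. ereal (real l)) \<le> ereal (real (size f))"
      using assms(2) unfolding lengths_def by (auto intro!: INF_lower)
  qed
  show ?thesis unfolding elasticity_def using assms(1) sup inf f0 by simp
qed

lemma constr: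
  fixes r :: rat and P Q :: nat
  assumes A: "Q \<ge> 2" "P > Q" "coprime P Q" "r = of_nat P / of_nat Q"
  shows "\<exists>m::nat. 1 \<le> m \<and> m \<le> Q ^ k \<and>
     (\<forall>L::nat. \<exists>x\<in>Sr r. elasticity (Sr r) x = ereal (real (P ^ k + L) / real (m + L)))"
proof -
  have r1: "r > 1" using A by simp
  have r0: "r > 0" using r1 by simp
  have inj: "inj (power r)" using inj_pow[OF r0] r1 by simp
  have P0: "P > 0" using A by linarith
  have atm: "\<And>n. r ^ n \<in> atoms (Sr r)" using pow_atom_gt1[OF A(1) P0 A(3) A(4) r1] by blast
  define F0 where "F0 = replicate_mset (Q ^ k) (r ^ k)"
  have F0: "F0 \<in> factorizations (Sr r) (of_nat (P ^ k))"
  proof -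
    have "of_nat (Q ^ k) * r ^ k = (of_nat Q * r) ^ k" by (simp add: power_mult_distrib)
    also have "of_nat Q * r = of_nat P" using A by simp
    finally show ?thesis unfolding F0_def factorizations_def using atm by simp
  qed
  obtain f0 where f0: "f0 \<in> factorizations (Sr r) (of_nat (P ^ k))" "\<forall>n. count f0 (r ^ n) < P"
    "size f0 \<le> size F0" using exist_min[OF A F0] by blast
  have sF0: "size F0 = Q ^ k" unfolding F0_def by simp
  have m1: "1 \<le> size f0"
  proof -
    have "f0 \<noteq> {#}" using f0(1) A unfolding factorizations_def by auto
    then show ?thesis by (simp add: Suc_le_eq nonempty_has_size)
  qed
  obtain s where s: "set_mset f0 \<subseteq> power r ` {..<s}"
    using finite_pow_bound[of "set_mset f0" r] fact_pows[OF r0 f0(1)] by auto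
  have "\<forall>L::nat. \<exists>x\<in>Sr r. elasticity (Sr r) x = ereal (real (P ^ k + L) / real (size f0 + L))"
  proof
    fix L :: nat
    define Pd where "Pd = mset_set (power r ` {s..<s+L})"
    have cPd: "\<And>n. count Pd (r ^ n) = (if s \<le> n \<and> n < s + L then 1 else 0)"
      unfolding Pd_def count_mset_set' using inj by (simp add: inj_image_mem_iff)
    have sPd: "size Pd = L" unfolding Pd_def using inj
      by (simp add: card_image inj_on_subset[OF inj])
    have setPd: "set_mset Pd \<subseteq> atoms (Sr r)" unfolding Pd_def using atm by auto
    define x where "x = of_nat (P ^ k) + sum_mset Pd"
    define g where "g = replicate_mset (P ^ k) 1 + Pd"
    define f where "f = f0 + Pd"
    have one: "(1::rat) \<in> atoms (Sr r)" using atm[of 0] by simp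
    have g: "g \<in> factorizations (Sr r) x" using setPd one unfolding g_def x_def factorizations_def by auto
    have f: "f \<in> factorizations (Sr r) x" using setPd f0(1) unfolding f_def x_def factorizations_def by auto
    have gc: "\<forall>n\<ge>1. count g (r ^ n) < Q"
    proof (intro allI impI)
      fix n :: nat assume "n \<ge> 1"
      then have "r ^ n > 1" using r1 by (simp add: one_less_power)
      then have "r ^ n \<noteq> 1" by simp
      then show "count g (r ^ n) < Q" unfolding g_def using cPd[of n] A by auto
    qed
    have fc: "\<forall>n. count f (r ^ n) < P"
    proof
      fix n
      show "count f (r ^ n) < P"
      proof (cases "n < s")
        case True then show ?thesis unfolding f_def using cPd[of n] f0(2) by simp
      next
        case False then show ?thesis unfolding f_def using cPd[of n] beyond_zero[OF inj s, of n] A by simp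
      qed
    qed
    have bounds: "\<And>h. h \<in> factorizations (Sr r) x \<Longrightarrow> size f \<le> size h \<and> size h \<le> size g"
      using minThm[OF A f fc] maxThm[OF A g gc] by blast
    have x0: "x \<noteq> 0"
    proof -
      have "0 \<le> sum_mset Pd" using setPd atoms_sub[OF r0] r0
        by (intro sum_mset_nonneg') (auto simp: order_less_imp_le)
      moreover have "(0::rat) < of_nat (P ^ k)" using A by simp
      ultimately show ?thesis unfolding x_def by linarith
    qed
    have xS: "x \<in> Sr r" using fact_pows[OF r0 g] Sr_sum_mset by metis
    have "elasticity (Sr r) x = ereal (real (size g) / real (size f))" by (rule elast_eq[OF x0 f g bounds])
    moreover have "size g = P ^ k + L" "size f = size f0 + L" unfolding g_def f_def using sPd by auto
    ultimately show "\<exists>x\<in>Sr r. elasticity (Sr r) x = ereal (real (P ^ k + L) / real (size f0 + L))"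
      using xS by auto
  qed
  then show ?thesis using m1 f0(3) sF0 by auto
qed

lemma real_choice:
  fixes a b m Pk :: real
  assumes "1 \<le> a" "a < b" "m \<ge> 1" "Pk > b * m + (a - 1) * (b - 1) / (b - a)"
  shows "\<exists>L::nat. a < (Pk + L) / (m + L) \<and> (Pk + L) / (m + L) < b"
proof -
  define C where "C = (a - 1) * (b - 1) / (b - a)"
  have C0: "C \<ge> 0" unfolding C_def using assms by simp
  have b1: "b > 1" using assms by linarith
  define t where "t = (Pk - b * m) / (b - 1)"
  have "Pk - b * m \<ge> 0" using assms C0 C_def by linarith
  then have t0: "t \<ge> 0" unfolding t_def using b1 by simp
  define L :: nat where "L = nat \<lfloor>t\<rfloor> + 1"
  have L1: "t < real L" unfolding L_def using t0 by linarith
  have L2: "real L \<le> t + 1" unfolding L_def using t0 by linarith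
  have mL: "m + real L > 0" using assms by simp
  have i1: "Pk - b * m < (b - 1) * real L"
  proof -
    have "(b - 1) * t = Pk - b * m" unfolding t_def using b1 by simp
    then show ?thesis using L1 b1 by (metis mult_strict_left_mono diff_gt_0_iff_gt)
  qed
  have up: "(Pk + L) / (m + L) < b"
    using i1 mL by (simp add: pos_divide_less_eq algebra_simps)
  have i2: "(a - 1) * real L < Pk - a * m"
  proof -
    have e1: "(a - 1) * real L \<le> (a - 1) * (t + 1)" using L2 assms by (simp add: mult_left_mono)
    have e2: "(b - 1) * ((a - 1) * (t + 1)) = (a - 1) * (Pk - b * m) + (a - 1) * (b - 1)"
      unfolding t_def using b1 by (simp add: field_simps)
    have e3: "(b - a) * C = (a - 1) * (b - 1)" unfolding C_def using assms by simp
    have e4: "Pk - m - C > 0" using assms C_def C0 by (smt (verit) mult_le_cancel_right1)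
    have "(b - 1) * (Pk - a * m) - (b - 1) * ((a - 1) * (t + 1)) = (b - a) * (Pk - m - C)"
      using e2 e3 by (simp add: algebra_simps)
    moreover have "(b - a) * (Pk - m - C) > 0" using e4 assms by simp
    ultimately have "(b - 1) * ((a - 1) * (t + 1)) < (b - 1) * (Pk - a * m)" by linarith
    then have "(a - 1) * (t + 1) < Pk - a * m" using b1 by simp
    then show ?thesis using e1 by linarith
  qed
  have lo: "a < (Pk + L) / (m + L)"
    using i2 mL by (simp add: pos_less_divide_eq algebra_simps)
  show ?thesis using up lo by blast
qed

lemma sum_ones: "set_mset f \<subseteq> {1::rat} \<Longrightarrow> sum_mset f = of_nat (size f)"
  by (induction f) auto

lemma caseB:
  fixes r :: rat
  assumes "r \<in> \<nat>" "r \<ge> 1" "atomic_monoid (Sr r)" "x \<in> Sr r"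
  shows "elasticity (Sr r) x = 1"
proof (cases "x = 0")
  case True then show ?thesis unfolding elasticity_def by simp
next
  case False
  have nat: "\<And>y. y \<in> Sr r \<Longrightarrow> y \<in> \<nat>"
  proof -
    fix y assume "y \<in> Sr r"
    then show "y \<in> \<nat>"
    proof (induction rule: Sr.induct)
      case zero then show ?case by simp
    next
      case (add_pow x n)
      have "r ^ n \<in> \<nat>" using assms(1) by (induction n) (auto simp: Nats_mult)
      then show ?case using add_pow by simp
    qed
  qed
  have natS: "\<And>j::nat. (of_nat j :: rat) \<in> Sr r" using mult_pow_in_Sr[of _ r 0] by simp
  have at1: "atoms (Sr r) \<subseteq> {1}"
  proof
    fix a assume a: "a \<in> atoms (Sr r)"
    then have aS: "a \<in> Sr r" and a0: "a \<noteq> 0" and na: "\<not> (\<exists>b\<in>Sr r. \<exists>c\<in>Sr r. b \<noteq> 0 \<and> c \<noteq> 0 \<and> a = b + c)"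
      by (auto simp: atoms_def)
    obtain k where k: "a = of_nat k" using nat[OF aS] by (auto elim: Nats_cases)
    show "a \<in> {1}"
    proof (rule ccontr)
      assume "a \<notin> {1}"
      then have k2: "k \<ge> 2" using k a0 by auto
      have "a = 1 + of_nat (k - 1)" using k k2 by (simp add: of_nat_diff)
      moreover have "(of_nat (k - 1) :: rat) \<noteq> 0" using k2 by simp
      moreover have "(1::rat) \<in> Sr r" using natS[of 1] by simp
      ultimately show False using na natS[of "k - 1"] by force
    qed
  qed
  have sz: "\<And>f. f \<in> factorizations (Sr r) x \<Longrightarrow> of_nat (size f) = x"
    using at1 sum_ones unfolding factorizations_def by fastforce
  obtain f0 where f0: "f0 \<in> factorizations (Sr r) x" using assms(3,4) False unfolding atomic_monoid_def by blast
  have "\<And>h. h \<in> factorizations (Sr r) x \<Longrightarrow> size f0 \<le> size h \<and> size h \<le> size f0"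
    using sz f0 by (metis of_nat_eq_iff order_refl)
  then have "elasticity (Sr r) x = ereal (real (size f0) / real (size f0))"
    by (rule elast_eq[OF False f0 f0])
  moreover have "size f0 \<noteq> 0" using f0 False unfolding factorizations_def by auto
  ultimately show ?thesis by (simp add: one_ereal_def)
qed

lemma caseC:
  fixes r :: rat and P Q :: nat
  assumes A: "P > 0" "P < Q" "coprime P Q" "r = of_nat P / of_nat Q"
    and "atomic_monoid (Sr r)" "x \<in> Sr r"
  shows "elasticity (Sr r) x = 1 \<or> elasticity (Sr r) x = \<infinity>"
proof (cases "x = 0")
  case True then show ?thesis unfolding elasticity_def by simp
next
  case False
  have r0: "r > 0" using A by simp
  have r1: "r < 1" using A by simp
  obtain f0 where f0: "f0 \<in> factorizations (Sr r) x" using assms(5,6) False unfolding atomic_monoid_def by blast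
  have szpos: "\<And>f. f \<in> factorizations (Sr r) x \<Longrightarrow> size f \<ge> 1"
  proof -
    fix f assume "f \<in> factorizations (Sr r) x"
    then have "f \<noteq> {#}" using False unfolding factorizations_def by auto
    then show "size f \<ge> 1" by (simp add: Suc_le_eq nonempty_has_size)
  qed
  show ?thesis
  proof (cases "\<exists>f\<in>factorizations (Sr r) x. \<exists>n. P \<le> count f (r ^ n)")
    case True
    then obtain f n where f: "f \<in> factorizations (Sr r) x" and n: "P \<le> count f (r ^ n)" by blast
    have "0 < count f (r ^ n)" using n A(1) by linarith
    then have "r ^ n \<in># f" by simp
    then have rat: "r ^ n \<in> atoms (Sr r)" using f unfolding factorizations_def by auto
    have P2: "P \<ge> 2"
    proof (rule ccontr)
      assume "\<not> P \<ge> 2"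
      then have P1: "P = 1" using A by simp
      have qr: "of_nat Q * r ^ Suc n = r ^ n" using step_eq[OF A(4), of n] A P1 by simp
      have "of_nat (Q - 1) * r ^ Suc n = of_nat Q * r ^ Suc n - r ^ Suc n"
        using A(2) by (simp add: of_nat_diff left_diff_distrib)
      then have "r ^ n = r ^ Suc n + of_nat (Q - 1) * r ^ Suc n"
        using qr by linarith
      moreover have "r ^ Suc n \<in> Sr r" "of_nat (Q - 1) * r ^ Suc n \<in> Sr r"
        using pow_in_Sr[of r "Suc n"] mult_pow_in_Sr[of "Q - 1" r "Suc n"] by blast+
      moreover have "r ^ Suc n \<noteq> 0" "of_nat (Q - 1) * r ^ Suc n \<noteq> 0" using r0 A P1 by auto
      ultimately show False using rat unfolding atoms_def by blast
    qed
    have atm: "\<And>m. r ^ m \<in> atoms (Sr r)" using pow_atom_lt1[OF P2 _ A(3) A(4) r1] A by simp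
    have chain: "\<And>j. \<exists>f'\<in>factorizations (Sr r) x. P \<le> count f' (r ^ (n + j)) \<and> size f + j \<le> size f'"
    proof -
      fix j show "\<exists>f'\<in>factorizations (Sr r) x. P \<le> count f' (r ^ (n + j)) \<and> size f + j \<le> size f'"
      proof (induction j)
        case 0 then show ?case using f n by auto
      next
        case (Suc j)
        then obtain f' where f': "f' \<in> factorizations (Sr r) x" "P \<le> count f' (r ^ (n + j))" "size f + j \<le> size f'"
          by blast
        have se: "of_nat P * r ^ (n + j) = of_nat Q * r ^ Suc (n + j)" using step_eq A by simp
        note mv = move[OF f'(1) f'(2) se atm]
        let ?g = "f' - replicate_mset P (r ^ (n + j)) + replicate_mset Q (r ^ Suc (n + j))"
        have "count ?g (r ^ Suc (n + j)) \<ge> Q" by simp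
        then have "P \<le> count ?g (r ^ (n + Suc j))" using A by simp
        moreover have "size f + Suc j \<le> size ?g" using mv(2,3) f'(3) A by simp
        ultimately show ?case using mv(1) by blast
      qed
    qed
    have sup: "(SUP l\<in>lengths (Sr r) x. ereal (real l)) = \<infinity>"
    proof (rule SUP_PInfty)
      fix N :: nat
      obtain f' where "f' \<in> factorizations (Sr r) x" "size f + N \<le> size f'" using chain[of N] by blast
      then show "\<exists>i\<in>lengths (Sr r) x. ereal (real N) \<le> ereal (real i)"
        unfolding lengths_def by (intro bexI[of _ "size f'"]) auto
    qed
    define I where "I = (INF l\<in>lengths (Sr r) x. ereal (real l))"
    have I1: "1 \<le> I" unfolding I_def lengths_def using szpos by (auto intro!: INF_greatest)
    have I2: "I \<le> ereal (real (size f))" unfolding I_def lengths_def using f by (auto intro!: INF_lower)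
    obtain c where c: "I = ereal c" "c \<ge> 1" using I1 I2 by (cases I) auto
    have "elasticity (Sr r) x = \<infinity> / ereal c" unfolding elasticity_def using False sup c I_def by simp
    also have "\<dots> = \<infinity>" using c by (simp add: divide_ereal_def)
    finally show ?thesis by simp
  next
    case False2: False
    have uniq: "\<And>h. h \<in> factorizations (Sr r) x \<Longrightarrow> h = f0"
    proof -
      fix h assume h: "h \<in> factorizations (Sr r) x"
      show "h = f0"
      proof (rule uniq_min[of "int Q" "int P" r])
        show "int Q > 0" "int P > 0" using A by auto
        show "coprime (int P) (int Q)" using A by simp
        show "r = of_int (int P) / of_int (int Q)" using A by simp
        show "r \<noteq> 1" using r1 by simp
        show "set_mset h \<subseteq> range (power r)" "set_mset f0 \<subseteq> range (power r)"
          using fact_pows[OF r0] h f0 by auto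
        show "sum_mset h = sum_mset f0" using fact_pows[OF r0] h f0 by auto
        show "\<And>n. int (count h (r ^ n)) < int P" "\<And>n. int (count f0 (r ^ n)) < int P"
          using False2 h f0 by (auto simp: not_le)
      qed
    qed
    have "\<And>h. h \<in> factorizations (Sr r) x \<Longrightarrow> size f0 \<le> size h \<and> size h \<le> size f0"
      using uniq by auto
    then have "elasticity (Sr r) x = ereal (real (size f0) / real (size f0))"
      by (rule elast_eq[OF False f0 f0])
    moreover have "size f0 \<noteq> 0" using szpos[OF f0] by linarith
    ultimately show ?thesis by (simp add: one_ereal_def)
  qed
qed

theorem corollary4p6:
  fixes r :: rat
  assumes "r > 0"
    and "atomic_monoid (Sr r)"
  shows "dense_in_ge1 (real_of_ereal ` (elasticity_set (Sr r) - {\<infinity>}))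
     \<longleftrightarrow> (r > 1 \<and> r \<notin> \<nat>)"
proof -
  obtain p q where pq: "quotient_of r = (p, q)" by (cases "quotient_of r")
  have q0: "q > 0" using quotient_of_denom_pos[OF pq] .
  have cop: "coprime p q" using quotient_of_coprime[OF pq] .
  have rdiv: "r = of_int p / of_int q" using quotient_of_div[OF pq] .
  have p0: "p > 0"
  proof -
    have "of_int p = r * of_int q" using rdiv q0 by simp
    then have "(0::rat) < of_int p" using assms(1) q0 by simp
    then show ?thesis by simp
  qed
  define P where "P = nat p"
  define Q where "Q = nat q"
  have PQ: "int P = p" "int Q = q" unfolding P_def Q_def using p0 q0 by auto
  have rPQ: "r = of_nat P / of_nat Q" using rdiv PQ by (metis of_int_of_nat_eq)
  have copPQ: "coprime P Q" using cop PQ by (metis coprime_int_iff)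
  have P0: "P > 0" "Q > 0" using PQ p0 q0 by auto
  let ?E = "real_of_ereal ` (elasticity_set (Sr r) - {\<infinity>})"
  show ?thesis
  proof
    assume dense: "dense_in_ge1 ?E"
    show "r > 1 \<and> r \<notin> \<nat>"
    proof (rule ccontr)
      assume nc: "\<not> (r > 1 \<and> r \<notin> \<nat>)"
      have all1: "\<And>x. x \<in> Sr r \<Longrightarrow> elasticity (Sr r) x = 1 \<or> elasticity (Sr r) x = \<infinity>"
      proof -
        fix x assume x: "x \<in> Sr r"
        show "elasticity (Sr r) x = 1 \<or> elasticity (Sr r) x = \<infinity>"
        proof (cases "r \<in> \<nat>")
          case True
          have "r \<noteq> 0" using assms by simp
          then have "r \<ge> 1" using True by (auto elim!: Nats_cases)
          then show ?thesis using caseB[OF True _ assms(2) x] by simp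
        next
          case False
          then have "r \<noteq> 1" by auto
          then have "r < 1" using nc False by auto
          then have "P < Q" using rPQ P0 by (simp add: divide_less_eq)
          then show ?thesis using caseC[OF P0(1) _ copPQ rPQ assms(2) x] by simp
        qed
      qed
      obtain y where y: "y \<in> ?E" "1 < y" "y < 2" using dense unfolding dense_in_ge1_def
        by (metis one_less_numeral_iff order_refl semiring_norm(76))
      then obtain e where e: "e \<in> elasticity_set (Sr r)" "e \<noteq> \<infinity>" "y = real_of_ereal e" by auto
      then obtain x where "x \<in> Sr r" "e = elasticity (Sr r) x" unfolding elasticity_set_def by auto
      then have "e = 1" using all1 e(2) by auto
      then show False using y e by simp
    qed
  next
    assume rc: "r > 1 \<and> r \<notin> \<nat>"
    have Q2: "Q \<ge> 2"
    proof (rule ccontr)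
      assume "\<not> Q \<ge> 2"
      then have "Q = 1" using P0 by simp
      then have "r = of_nat P" using rPQ by simp
      then show False using rc by simp
    qed
    have PgQ: "P > Q" using rc rPQ P0 by (simp add: less_divide_eq)
    show "dense_in_ge1 ?E"
      unfolding dense_in_ge1_def
    proof (intro allI impI)
      fix a b :: real assume ab: "1 \<le> a \<and> a < b"
      define C where "C = (a - 1) * (b - 1) / (b - a)"
      have C0: "C \<ge> 0" unfolding C_def using ab by simp
      have "1 < real P / real Q" using PgQ P0 by simp
      then obtain k where k: "b + C < (real P / real Q) ^ k" using real_arch_pow by blast
      obtain m where m: "1 \<le> m" "m \<le> Q ^ k"
        "\<forall>L::nat. \<exists>x\<in>Sr r. elasticity (Sr r) x = ereal (real (P ^ k + L) / real (m + L))"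
        using constr[OF Q2 PgQ copPQ rPQ, of k] by blast
      have Qk: "real Q ^ k \<ge> 1" using P0 by simp
      have "real (P ^ k) = (real P / real Q) ^ k * real Q ^ k" using P0 by (simp add: power_divide)
      also have "\<dots> > (b + C) * real Q ^ k" using k Qk P0 by (intro mult_strict_right_mono) auto
      finally have "real (P ^ k) > (b + C) * real Q ^ k" .
      moreover have "(b + C) * real Q ^ k \<ge> b * real m + C"
      proof -
        have "b * real m \<le> b * real Q ^ k" using m ab by (metis of_nat_le_iff of_nat_power mult_left_mono less_le_trans zero_less_one order_less_imp_le)
        moreover have "C \<le> C * real Q ^ k" using C0 Qk by (simp add: mult_le_cancel_left1)
        ultimately show ?thesis by (simp add: algebra_simps)
      qed
      ultimately have "real (P ^ k) > b * real m + C" by linarith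
      then obtain L :: nat where L: "a < (real (P ^ k) + L) / (real m + L)" "(real (P ^ k) + L) / (real m + L) < b"
        using real_choice[of a b "real m" "real (P ^ k)"] ab m C_def by auto
      obtain x where x: "x \<in> Sr r" "elasticity (Sr r) x = ereal (real (P ^ k + L) / real (m + L))"
        using m(3) by blast
      let ?y = "real (P ^ k + L) / real (m + L)"
      have "ereal ?y \<in> elasticity_set (Sr r)" unfolding elasticity_set_def using x
        by (metis image_eqI)
      then have "ereal ?y \<in> elasticity_set (Sr r) - {\<infinity>}" by simp
      then have "real_of_ereal (ereal ?y) \<in> ?E" by (rule imageI)
      then have "?y \<in> ?E" by simp
      moreover have "a < ?y" "?y < b" using L by auto
      ultimately show "\<exists>x\<in>?E. a < x \<and> x < b" by blast
    qed
  qed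
qed

end
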